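(* Let $\mathcal{I}\in\mathrm{Ins}(\Omega,\mathcal{H},\mathcal{K})$ be an indecomposable instrument. Then every instrument $\mathcal{J}\in\mathrm{Ins}(\Lambda,\mathcal{H},\mathcal{V})$ that is compatible with $\mathcal{I}$ is of the form $\mathcal{J}_y(\varrho)=\sum_{x\in\Omega}\mathrm{tr}[\nu_{xy}\mathsf{A}^{\mathcal{I}}(x)\varrho]\,\xi_{xy}$ for all $y\in\Lambda$ and states $\varrho$, for some family of states $\{\xi_{xy}\}_{x\in\Omega,y\in\Lambda}$ on $\mathcal{V}$ and some stochastic matrix $\nu=(\nu_{xy})_{x\in\Omega,y\in\Lambda}$ (i.e. $\nu_{xy}\ge 0$ and $\sum_y\nu_{xy}=1$ for all $x$).
   Context: All Hilbert spaces are finite-dimensional and complex, and all outcome sets are finite. An instrument $\mathcal{I}\in\mathrm{Ins}(\Omega,\mathcal{H},\mathcal{K})$ is a family $(\mathcal{I}_x)_{x\in\Omega}$ of completely positive trace-nonincreasing linear maps $\mathcal{L}(\mathcal{H})\to\mathcal{L}(\mathcal{K})$ whose sum is trace preserving; its induced POVM is given by $\mathrm{tr}[\mathsf{A}^{\mathcal{I}}(x)\varrho]=\mathrm{tr}[\mathcal{I}_x(\varrho)]$. $\mathcal{I}$ is indecomposable if each nonzero $\mathcal{I}_x$ has Kraus rank 1, i.e. $\mathcal{I}_x(\varrho)=K_x\varrho K_x^*$ for some operator $K_x:\mathcal{H}\to\mathcal{K}$. Two instruments $\mathcal{I}\in\mathrm{Ins}(\Omega,\mathcal{H},\mathcal{K})$,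 $\mathcal{J}\in\mathrm{Ins}(\Lambda,\mathcal{H},\mathcal{V})$ are compatible if there is $\mathcal{G}\in\mathrm{Ins}(\Omega\times\Lambda,\mathcal{H},\mathcal{K}\otimes\mathcal{V})$ with $\sum_{x}\mathrm{tr}_{\mathcal{K}}[\mathcal{G}_{(x,y)}(\varrho)]=\mathcal{J}_y(\varrho)$ for all $y$ and $\sum_y\mathrm{tr}_{\mathcal{V}}[\mathcal{G}_{(x,y)}(\varrho)]=\mathcal{I}_x(\varrho)$ for all $x$, for all states $\varrho$. *)

theory Defs
  imports Complex_Main "HOL-Library.Function_Algebras"
begin

text \<open>Finite-dimensional Hilbert spaces are modelled as l2 over a finite index type;
  an operator from C^'a to C^'b is a matrix 'b => 'a => complex (w.r.t. the standard basis).
  The tensor product K (x) V is indexed by the product type 'k * 'v.\<close>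

type_synonym ('b, 'a) lmat = "'b \<Rightarrow> 'a \<Rightarrow> complex"

definition op_trace :: "('a::finite, 'a) lmat \<Rightarrow> complex" where
  "op_trace M = (\<Sum>i\<in>UNIV. M i i)"

definition op_mult :: "('c, 'b::finite) lmat \<Rightarrow> ('b, 'a) lmat \<Rightarrow> ('c, 'a) lmat" where
  "op_mult A B = (\<lambda>i j. \<Sum>k\<in>UNIV. A i k * B k j)"

definition op_scale :: "complex \<Rightarrow> ('b, 'a) lmat \<Rightarrow> ('b, 'a) lmat" where
  "op_scale c A = (\<lambda>i j. c * A i j)"

definition psd_on :: "'a set \<Rightarrow> ('a, 'a) lmat \<Rightarrow> bool" where
  "psd_on S M \<longleftrightarrow> (\<forall>v :: 'a \<Rightarrow> complex.
     let q = (\<Sum>i\<in>S. \<Sum>j\<in>S. cnj (v i) * M i j * v j) in Im q = 0 \<and> Re q \<ge> 0)"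

definition psd :: "('a, 'a) lmat \<Rightarrow> bool" where
  "psd M \<longleftrightarrow> psd_on UNIV M"

definition is_state :: "('a::finite, 'a) lmat \<Rightarrow> bool" where
  "is_state \<rho> \<longleftrightarrow> psd \<rho> \<and> op_trace \<rho> = 1"

definition lin_map :: "(('a, 'a) lmat \<Rightarrow> ('b, 'b) lmat) \<Rightarrow> bool" where
  "lin_map \<Phi> \<longleftrightarrow> (\<forall>X Y. \<Phi> (X + Y) = \<Phi> X + \<Phi> Y) \<and> (\<forall>c X. \<Phi> (op_scale c X) = op_scale c (\<Phi> X))"

text \<open>Complete positivity: id_n (x) Phi is positive for every ancilla dimension n;
  operators on C^n (x) H are matrices indexed by {..<n} x UNIV.\<close>
definition ampliate :: "nat \<Rightarrow> (('a, 'a) lmat \<Rightarrow> ('b, 'b) lmat) \<Rightarrow> (nat \<times> 'a, nat \<times> 'a) lmat \<Rightarrow> (nat \<times> 'b, nat \<times> 'b) lmat" where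
  "ampliate n \<Phi> X = (\<lambda>(i, a) (j, b). if i < n \<and> j < n then \<Phi> (\<lambda>a' b'. X (i, a') (j, b')) a b else 0)"

definition completely_positive :: "(('a, 'a) lmat \<Rightarrow> ('b, 'b) lmat) \<Rightarrow> bool" where
  "completely_positive \<Phi> \<longleftrightarrow> lin_map \<Phi> \<and>
     (\<forall>n X. psd_on ({..<n} \<times> UNIV) X \<longrightarrow> psd_on ({..<n} \<times> UNIV) (ampliate n \<Phi> X))"

definition trace_nonincreasing :: "(('a::finite, 'a) lmat \<Rightarrow> ('b::finite, 'b) lmat) \<Rightarrow> bool" where
  "trace_nonincreasing \<Phi> \<longleftrightarrow> (\<forall>\<rho>. psd \<rho> \<longrightarrow> Re (op_trace (\<Phi> \<rho>)) \<le> Re (op_trace \<rho>))"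

definition instrument :: "('x::finite \<Rightarrow> ('a::finite, 'a) lmat \<Rightarrow> ('b::finite, 'b) lmat) \<Rightarrow> bool" where
  "instrument I \<longleftrightarrow> (\<forall>x. completely_positive (I x) \<and> trace_nonincreasing (I x)) \<and>
     (\<forall>X. op_trace (\<Sum>x\<in>UNIV. I x X) = op_trace X)"

definition induced_povm :: "('x \<Rightarrow> ('a::finite, 'a) lmat \<Rightarrow> ('b::finite, 'b) lmat) \<Rightarrow> 'x \<Rightarrow> ('a, 'a) lmat" where
  "induced_povm I x = (SOME A. \<forall>\<rho>. is_state \<rho> \<longrightarrow> op_trace (op_mult A \<rho>) = op_trace (I x \<rho>))"

definition kraus1 :: "('b, 'a::finite) lmat \<Rightarrow> ('a, 'a) lmat \<Rightarrow> ('b, 'b) lmat" where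
  "kraus1 K \<rho> = (\<lambda>a b. \<Sum>i\<in>UNIV. \<Sum>j\<in>UNIV. K a i * \<rho> i j * cnj (K b j))"

definition indecomposable :: "('x \<Rightarrow> ('a::finite, 'a) lmat \<Rightarrow> ('b, 'b) lmat) \<Rightarrow> bool" where
  "indecomposable I \<longleftrightarrow> (\<forall>x. I x \<noteq> (\<lambda>_. 0) \<longrightarrow> (\<exists>K. I x = kraus1 K))"

definition ptrace1 :: "('k::finite \<times> 'v, 'k \<times> 'v) lmat \<Rightarrow> ('v, 'v) lmat" where
  "ptrace1 M = (\<lambda>v v'. \<Sum>k\<in>UNIV. M (k, v) (k, v'))"

definition ptrace2 :: "('k \<times> 'v::finite, 'k \<times> 'v) lmat \<Rightarrow> ('k, 'k) lmat" where
  "ptrace2 M = (\<lambda>k k'. \<Sum>v\<in>UNIV. M (k, v) (k', v))"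

definition compatible ::
  "('x::finite \<Rightarrow> ('a::finite, 'a) lmat \<Rightarrow> ('k::finite, 'k) lmat) \<Rightarrow>
   ('y::finite \<Rightarrow> ('a, 'a) lmat \<Rightarrow> ('v::finite, 'v) lmat) \<Rightarrow> bool" where
  "compatible I J \<longleftrightarrow> (\<exists>G :: 'x \<times> 'y \<Rightarrow> ('a, 'a) lmat \<Rightarrow> ('k \<times> 'v, 'k \<times> 'v) lmat.
      instrument G \<and>
      (\<forall>\<rho>. is_state \<rho> \<longrightarrow>
         (\<forall>y. (\<Sum>x\<in>UNIV. ptrace1 (G (x, y) \<rho>)) = J y \<rho>) \<and>
         (\<forall>x. (\<Sum>y\<in>UNIV. ptrace2 (G (x, y) \<rho>)) = I x \<rho>)))"

end

theory Submission
  imports Defs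
begin

lemma sum_fun_apply: "(sum f A) x = sum (\<lambda>i. f i x) A"
  by (induction A rule: infinite_finite_induct) auto

definition qf :: "'a set \<Rightarrow> ('a,'a) lmat \<Rightarrow> ('a \<Rightarrow> complex) \<Rightarrow> ('a \<Rightarrow> complex) \<Rightarrow> complex" where
  "qf S M u z = (\<Sum>i\<in>S. \<Sum>j\<in>S. cnj (u i) * M i j * z j)"

lemma psd_on_qf: "psd_on S M \<longleftrightarrow> (\<forall>v. Im (qf S M v v) = 0 \<and> Re (qf S M v v) \<ge> 0)"
  by (simp add: psd_on_def qf_def Let_def)

lemma qf_expand:
  "qf S M (\<lambda>i. u i + t * z i) (\<lambda>i. u i + t * z i) =
   qf S M u u + t * qf S M u z + cnj t * qf S M z u + cnj t * t * qf S M z z"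
  unfolding qf_def
  by (simp add: sum_distrib_left sum.distrib[symmetric] algebra_simps)

lemma lin_quad_zero:
  fixes a b :: real
  assumes "\<And>e. a * e + b * e^2 \<ge> 0" "b \<ge> 0"
  shows "a = 0"
proof -
  define c where "c = b + 1"
  have c: "c > 0" "b = c - 1" using assms(2) by (auto simp: c_def)
  have "a * (-a/c) + b * (-a/c)^2 \<ge> 0" using assms(1) .
  moreover have "a * (-a/c) + b * (-a/c)^2 = -(a^2 / c^2)"
    using c(1) unfolding c(2) by (simp add: field_simps power2_eq_square)
  ultimately have "a^2 / c^2 \<le> 0" by linarith
  moreover have "c^2 > 0" using c by simp
  ultimately have "a^2 \<le> 0" by (simp add: divide_le_0_iff)
  thus ?thesis by simp
qed

lemma psd_cs:
  assumes psd: "psd_on S M" and z0: "qf S M u u = 0"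
  shows "qf S M u z = 0 \<and> qf S M z u = 0"
proof -
  define \<alpha> where "\<alpha> = qf S M u z"
  define \<beta> where "\<beta> = qf S M z u"
  define \<gamma> where "\<gamma> = qf S M z z"
  have g: "Im \<gamma> = 0" "Re \<gamma> \<ge> 0" using psd unfolding psd_on_qf \<gamma>_def by auto
  have P: "Im (t * \<alpha> + cnj t * \<beta> + cnj t * t * \<gamma>) = 0 \<and> Re (t * \<alpha> + cnj t * \<beta> + cnj t * t * \<gamma>) \<ge> 0" for t
    using psd unfolding psd_on_qf
    by (metis (no_types, lifting) \<alpha>_def \<beta>_def \<gamma>_def add_0 qf_expand z0)
  have r1: "Re (\<alpha> + \<beta>) * e + Re \<gamma> * e^2 \<ge> 0" for e
    using P[of "complex_of_real e"] by (simp add: power2_eq_square algebra_simps)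
  have i1: "Im (\<alpha> + \<beta>) = 0"
    using P[of 1] g by simp
  have r2: "Im (\<beta> - \<alpha>) * e + Re \<gamma> * e^2 \<ge> 0" for e
    using P[of "\<i> * complex_of_real e"] by (simp add: power2_eq_square algebra_simps)
  have i2: "Re (\<alpha> - \<beta>) = 0"
    using P[of "\<i>"] g by simp
  have "Re (\<alpha> + \<beta>) = 0" using lin_quad_zero[OF r1 g(2)] .
  moreover have "Im (\<beta> - \<alpha>) = 0" using lin_quad_zero[OF r2 g(2)] .
  ultimately have "\<alpha> = 0" "\<beta> = 0" using i1 i2 by (simp_all add: complex_eq_iff)
  thus ?thesis by (simp add: \<alpha>_def \<beta>_def)
qed

lemma slice_snd:
  assumes "finite T"
  shows "(\<Sum>p\<in>T\<times>(UNIV::'v::finite set). if snd p = v then f p else 0) = (\<Sum>a\<in>T. f (a,v))"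
proof -
  have "(\<Sum>p\<in>T\<times>(UNIV::'v::finite set). if snd p = v then f p else 0)
     = (\<Sum>a\<in>T. \<Sum>v'\<in>UNIV. if v' = v then f (a,v') else 0)"
    by (subst sum.cartesian_product) (auto simp: case_prod_beta' intro!: sum.cong)
  also have "\<dots> = (\<Sum>a\<in>T. f (a,v))" by simp
  finally show ?thesis .
qed

lemma slice_fst:
  assumes "finite T" "a0 \<in> T"
  shows "(\<Sum>p\<in>T\<times>(UNIV::'v::finite set). if fst p = a0 then f p else 0) = (\<Sum>v\<in>UNIV. f (a0,v))"
proof -
  have "(\<Sum>p\<in>T\<times>(UNIV::'v::finite set). if fst p = a0 then f p else 0)
     = (\<Sum>a\<in>T. \<Sum>v'\<in>UNIV. if a = a0 then f (a,v') else 0)"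
    by (subst sum.cartesian_product) (auto simp: case_prod_beta' intro!: sum.cong)
  also have "\<dots> = (\<Sum>a\<in>T. if a = a0 then (\<Sum>v'\<in>UNIV. f (a,v')) else 0)"
    by (intro sum.cong) auto
  also have "\<dots> = (\<Sum>v\<in>UNIV. f (a0,v))" using assms by simp
  finally show ?thesis .
qed

lemma qf_delta_r:
  assumes "finite S" "q0 \<in> S"
  shows "qf S M u (\<lambda>q. if q = q0 then 1 else 0) = (\<Sum>p\<in>S. cnj (u p) * M p q0)"
  using assms unfolding qf_def by (simp add: if_distrib cong: if_cong)

lemma qf_delta_l:
  assumes "finite S" "q0 \<in> S"
  shows "qf S M (\<lambda>q. if q = q0 then 1 else 0) u = (\<Sum>p\<in>S. M q0 p * u p)"
proof -
  have "qf S M (\<lambda>q. if q = q0 then 1 else 0) u = (\<Sum>i\<in>S. if i = q0 then (\<Sum>j\<in>S. M i j * u j) else 0)"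
    unfolding qf_def by (intro sum.cong) auto
  thus ?thesis using assms by simp
qed

lemma qf_su:
  fixes M :: "('s \<times> 'v::finite, 's \<times> 'v) lmat"
  assumes "finite T"
  shows "qf (T\<times>UNIV) M (\<lambda>p. if snd p = v then u (fst p) else 0) (\<lambda>p. if snd p = v then u' (fst p) else 0)
    = (\<Sum>a\<in>T. \<Sum>b\<in>T. cnj (u a) * M (a,v) (b,v) * u' b)"
proof -
  have "qf (T\<times>UNIV) M (\<lambda>p. if snd p = v then u (fst p) else 0) (\<lambda>p. if snd p = v then u' (fst p) else 0)
     = (\<Sum>p\<in>T\<times>UNIV. if snd p = v then (\<Sum>q\<in>T\<times>UNIV. if snd q = v then cnj (u (fst p)) * M p q * u' (fst q) else 0) else 0)"
    unfolding qf_def by (intro sum.cong refl) (auto intro!: sum.cong)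
  also have "\<dots> = (\<Sum>a\<in>T. \<Sum>b\<in>T. cnj (u a) * M (a,v) (b,v) * u' b)"
    using assms by (simp add: slice_snd)
  finally show ?thesis .
qed

lemma qf_sf:
  fixes M :: "('s \<times> 'v::finite, 's \<times> 'v) lmat"
  assumes "finite T" "a0 \<in> T"
  shows "qf (T\<times>UNIV) M (\<lambda>p. if fst p = a0 then z (snd p) else 0) (\<lambda>p. if fst p = a0 then z (snd p) else 0)
    = qf UNIV (\<lambda>v v'. M (a0,v) (a0,v')) z z"
proof -
  have "qf (T\<times>UNIV) M (\<lambda>p. if fst p = a0 then z (snd p) else 0) (\<lambda>p. if fst p = a0 then z (snd p) else 0)
     = (\<Sum>p\<in>T\<times>UNIV. if fst p = a0 then (\<Sum>q\<in>T\<times>UNIV. if fst q = a0 then cnj (z (snd p)) * M p q * z (snd q) else 0) else 0)"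
    unfolding qf_def by (intro sum.cong refl) (auto intro!: sum.cong)
  also have "\<dots> = qf UNIV (\<lambda>v v'. M (a0,v) (a0,v')) z z"
    using assms by (simp add: slice_fst qf_def)
  finally show ?thesis .
qed

lemma qf_div: "qf S (\<lambda>v v'. X v v' / c) z z' = qf S X z z' / c"
  unfolding qf_def by (simp add: sum_divide_distrib)

lemma qf_Q_expand:
  fixes M :: "('s \<times> 'v::finite, 's \<times> 'v) lmat"
  assumes fin: "finite T"
  shows "qf T (\<lambda>a b. w a * cnj (w b) - (\<Sum>v\<in>UNIV. M (a,v) (b,v))) u u
       = (\<Sum>a\<in>T. cnj (u a) * w a) * cnj (\<Sum>a\<in>T. cnj (u a) * w a)
         - (\<Sum>v\<in>UNIV. qf (T\<times>UNIV) M (\<lambda>p. if snd p = v then u (fst p) else 0) (\<lambda>p. if snd p = v then u (fst p) else 0))"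
proof -
  have 1: "qf T (\<lambda>a b. w a * cnj (w b) - (\<Sum>v\<in>UNIV. M (a,v) (b,v))) u u
     = (\<Sum>a\<in>T. \<Sum>b\<in>T. (cnj (u a) * w a) * (cnj (w b) * u b))
       - (\<Sum>a\<in>T. \<Sum>b\<in>T. \<Sum>v\<in>UNIV. cnj (u a) * M (a,v) (b,v) * u b)"
    unfolding qf_def
    by (simp add: sum_subtractf[symmetric] algebra_simps sum_distrib_left sum_distrib_right)
  have 2: "(\<Sum>a\<in>T. \<Sum>b\<in>T. (cnj (u a) * w a) * (cnj (w b) * u b))
     = (\<Sum>a\<in>T. cnj (u a) * w a) * cnj (\<Sum>a\<in>T. cnj (u a) * w a)"
    by (simp add: sum_product cnj_sum mult.commute) (subst sum.swap, simp)
  have 3: "(\<Sum>a\<in>T. \<Sum>b\<in>T. \<Sum>v\<in>UNIV. cnj (u a) * M (a,v) (b,v) * u b)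
     = (\<Sum>v\<in>UNIV. \<Sum>a\<in>T. \<Sum>b\<in>T. cnj (u a) * M (a,v) (b,v) * u b)"
    by (subst sum.swap) (simp add: sum.swap[of _ T UNIV])
  show ?thesis unfolding 1 2 3 qf_su[OF fin] ..
qed

lemma rank_one_core:
  fixes M :: "('s \<times> 'v::finite, 's \<times> 'v) lmat" and w :: "'s \<Rightarrow> complex"
  assumes fin: "finite T" and pM: "psd_on (T\<times>UNIV) M"
    and pQ: "psd_on T (\<lambda>a b. w a * cnj (w b) - (\<Sum>v\<in>UNIV. M (a,v) (b,v)))"
  shows "\<exists>\<tau>. psd \<tau> \<and> (\<forall>a\<in>T. \<forall>b\<in>T. \<forall>v v'. M (a,v) (b,v') = w a * cnj (w b) * \<tau> v v')"
proof -
  define su where "su (u::'s \<Rightarrow> complex) v = (\<lambda>p::'s\<times>'v. if snd p = v then u (fst p) else 0)" for u v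
  have A: "qf (T\<times>UNIV) M (su u v) (su u v) = 0" if orth: "(\<Sum>a\<in>T. cnj (u a) * w a) = 0" for u v
  proof -
    let ?r = "\<lambda>v. qf (T\<times>UNIV) M (su u v) (su u v)"
    have r: "Im (?r v) = 0 \<and> Re (?r v) \<ge> 0" for v using pM unfolding psd_on_qf by blast
    have "Re (qf T (\<lambda>a b. w a * cnj (w b) - (\<Sum>v\<in>UNIV. M (a,v) (b,v))) u u) \<ge> 0"
      using pQ unfolding psd_on_qf by blast
    hence "Re (- (\<Sum>v\<in>UNIV. ?r v)) \<ge> 0"
      unfolding qf_Q_expand[OF fin] orth su_def by simp
    hence "(\<Sum>v\<in>UNIV. Re (?r v)) \<le> 0" by (simp add: Re_sum)
    hence "(\<Sum>v\<in>UNIV. Re (?r v)) = 0" using r by (meson antisym sum_nonneg)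
    hence "Re (?r v) = 0" using r by (simp add: sum_nonneg_eq_0_iff)
    thus ?thesis using r[of v] by (simp add: complex_eq_iff)
  qed
  have B: "(\<Sum>a\<in>T. cnj (u a) * M (a,v) (b,v')) = 0 \<and> (\<Sum>a\<in>T. M (b,v') (a,v) * u a) = 0"
    if orth: "(\<Sum>a\<in>T. cnj (u a) * w a) = 0" and b: "b \<in> T" for u v b v'
  proof -
    have bv: "(b,v') \<in> T \<times> UNIV" using b by simp
    have fin2: "finite (T \<times> (UNIV::'v set))" using fin by simp
    note cs = psd_cs[OF pM A[OF orth], of v "\<lambda>q. if q = (b,v') then 1 else 0"]
    have e1: "(\<Sum>p\<in>T\<times>UNIV. cnj (su u v p) * M p (b,v')) = (\<Sum>a\<in>T. cnj (u a) * M (a,v) (b,v'))"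
    proof -
      have "(\<Sum>p\<in>T\<times>UNIV. cnj (su u v p) * M p (b,v')) = (\<Sum>p\<in>T\<times>UNIV. if snd p = v then cnj (u (fst p)) * M p (b,v') else 0)"
        unfolding su_def by (intro sum.cong) auto
      thus ?thesis by (simp add: slice_snd[OF fin])
    qed
    have e2: "(\<Sum>p\<in>T\<times>UNIV. M (b,v') p * su u v p) = (\<Sum>a\<in>T. M (b,v') (a,v) * u a)"
    proof -
      have "(\<Sum>p\<in>T\<times>UNIV. M (b,v') p * su u v p) = (\<Sum>p\<in>T\<times>UNIV. if snd p = v then M (b,v') p * u (fst p) else 0)"
        unfolding su_def by (intro sum.cong) auto
      thus ?thesis by (simp add: slice_snd[OF fin])
    qed
    show ?thesis using cs unfolding qf_delta_r[OF fin2 bv] qf_delta_l[OF fin2 bv] e1 e2 by simp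
  qed
  show ?thesis
  proof (cases "\<forall>a\<in>T. w a = 0")
    case True
    have "M (a,v) (b,v') = 0" if "a \<in> T" "b \<in> T" for a b v v'
    proof -
      have o: "(\<Sum>i\<in>T. cnj (if i = a then 1 else 0) * w i) = 0" using True that fin by simp
      have "(\<Sum>i\<in>T. cnj (if i = a then 1 else 0) * M (i,v) (b,v')) = (\<Sum>i\<in>T. if i = a then M (i,v) (b,v') else 0)"
        by (intro sum.cong) auto
      with B[OF o \<open>b \<in> T\<close>, of v v'] show ?thesis using that fin by simp
    qed
    moreover have "psd (\<lambda>_ _. 0)" unfolding psd_def psd_on_qf qf_def by simp
    ultimately show ?thesis using True by auto
  next
    case False
    then obtain a0 where a0: "a0 \<in> T" "w a0 \<noteq> 0" by auto
    define uu where "uu a = (\<lambda>i. (if i = a then cnj (w a0) else 0) + (if i = a0 then - cnj (w a) else 0))" for a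
    have orth: "(\<Sum>i\<in>T. cnj (uu a i) * w i) = 0" if "a \<in> T" for a
    proof -
      have "(\<Sum>i\<in>T. cnj (uu a i) * w i) = (\<Sum>i\<in>T. (if i = a then w a0 * w i else 0) + (if i = a0 then - w a * w i else 0))"
        unfolding uu_def by (intro sum.cong) (auto simp: distrib_right)
      also have "\<dots> = 0" using that a0 fin by (simp add: sum.distrib)
      finally show ?thesis .
    qed
    have col: "w a0 * M (a,v) (b,v') = w a * M (a0,v) (b,v')" if "a \<in> T" "b \<in> T" for a b v v'
    proof -
      have "(\<Sum>i\<in>T. cnj (uu a i) * M (i,v) (b,v')) = (\<Sum>i\<in>T. (if i = a then w a0 * M (i,v) (b,v') else 0) + (if i = a0 then - w a * M (i,v) (b,v') else 0))"
        unfolding uu_def by (intro sum.cong) (auto simp: distrib_right)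
      also have "\<dots> = w a0 * M (a,v) (b,v') - w a * M (a0,v) (b,v')" using that a0 fin by (simp add: sum.distrib)
      finally show ?thesis using B[OF orth[OF that(1)] that(2), of v v'] by simp
    qed
    have row: "cnj (w a0) * M (b,v') (a,v) = cnj (w a) * M (b,v') (a0,v)" if "a \<in> T" "b \<in> T" for a b v v'
    proof -
      have "(\<Sum>i\<in>T. M (b,v') (i,v) * uu a i) = (\<Sum>i\<in>T. (if i = a then cnj (w a0) * M (b,v') (i,v) else 0) + (if i = a0 then - cnj (w a) * M (b,v') (i,v) else 0))"
        unfolding uu_def by (intro sum.cong) (auto simp: algebra_simps)
      also have "\<dots> = cnj (w a0) * M (b,v') (a,v) - cnj (w a) * M (b,v') (a0,v)" using that a0 fin by (simp add: sum.distrib)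
      finally show ?thesis using B[OF orth[OF that(1)] that(2), of v v'] by simp
    qed
    define c where "c = w a0 * cnj (w a0)"
    have c: "c = complex_of_real ((cmod (w a0))^2)" "(cmod (w a0))^2 > 0"
      using a0 by (auto simp: c_def complex_norm_square[symmetric] simp del: of_real_power)
    define \<tau> where "\<tau> v v' = M (a0,v) (a0,v') / c" for v v'
    have "M (a,v) (b,v') = w a * cnj (w b) * \<tau> v v'" if "a \<in> T" "b \<in> T" for a b v v'
    proof -
      have 1: "M (a,v) (b,v') = w a * M (a0,v) (b,v') / w a0" using col[OF that] a0 by (simp add: field_simps)
      have 2: "M (a0,v) (b,v') = cnj (w b) * M (a0,v) (a0,v') / cnj (w a0)"
        using row[OF that(2) a0(1), of v v'] a0 by (simp add: field_simps)
      show ?thesis unfolding 1 2 \<tau>_def c_def using a0 by (simp add: field_simps)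
    qed
    moreover have "psd \<tau>"
      unfolding psd_def psd_on_qf
    proof
      fix z
      have "qf UNIV \<tau> z z = qf (T\<times>UNIV) M (\<lambda>p. if fst p = a0 then z (snd p) else 0) (\<lambda>p. if fst p = a0 then z (snd p) else 0) / c"
        unfolding qf_sf[OF fin a0(1)] \<tau>_def qf_div[of UNIV "\<lambda>v v'. M (a0,v) (a0,v')"] ..
      moreover note pM[unfolded psd_on_qf, rule_format, of "\<lambda>p. if fst p = a0 then z (snd p) else 0"]
      ultimately show "Im (qf UNIV \<tau> z z) = 0 \<and> 0 \<le> Re (qf UNIV \<tau> z z)"
        using c by (simp add: Re_divide_of_real Im_divide_of_real)
    qed
    ultimately show ?thesis by blast
  qed
qed

definition rank1 :: "('b \<Rightarrow> complex) \<Rightarrow> ('a \<Rightarrow> complex) \<Rightarrow> ('b,'a) lmat" where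
  "rank1 h g = (\<lambda>a b. h a * cnj (g b))"

definition tens :: "('k,'k) lmat \<Rightarrow> ('v,'v) lmat \<Rightarrow> ('k\<times>'v,'k\<times>'v) lmat" where
  "tens A \<tau> = (\<lambda>p q. A (fst p) (fst q) * \<tau> (snd p) (snd q))"

lemma qf_sum_mat: "qf S (\<lambda>p q. \<Sum>y\<in>Y. F y p q) u z = (\<Sum>y\<in>Y. qf S (F y) u z)"
  unfolding qf_def by (simp add: sum_distrib_left sum_distrib_right) (subst (2) sum.swap, subst sum.swap, rule refl)

lemma psd_on_sum:
  assumes "\<And>y. y \<in> Y \<Longrightarrow> psd_on S (F y)"
  shows "psd_on S (\<lambda>p q. \<Sum>y\<in>Y. F y p q)"
  using assms unfolding psd_on_qf qf_sum_mat by (simp add: Im_sum Re_sum sum_nonneg)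

lemma psd_on_ptrace:
  fixes N :: "('s \<times> 'v::finite, 's \<times> 'v) lmat"
  assumes fin: "finite T" and p: "psd_on (T\<times>UNIV) N"
  shows "psd_on T (\<lambda>a b. \<Sum>v\<in>UNIV. N (a,v) (b,v))"
proof -
  have "qf T (\<lambda>a b. \<Sum>v\<in>UNIV. N (a,v) (b,v)) u u = (\<Sum>v\<in>UNIV. qf (T\<times>UNIV) N (\<lambda>p. if snd p = v then u (fst p) else 0) (\<lambda>p. if snd p = v then u (fst p) else 0))" for u
    unfolding qf_su[OF fin] qf_sum_mat[of T "\<lambda>v a b. N (a,v) (b,v)" UNIV] unfolding qf_def ..
  thus ?thesis using p unfolding psd_on_qf by (simp add: Im_sum Re_sum sum_nonneg)
qed

lemma psd_on_cong:
  assumes "psd_on S N" "\<And>p q. p \<in> S \<Longrightarrow> q \<in> S \<Longrightarrow> N p q = N' p q"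
  shows "psd_on S N'"
proof -
  have "qf S N u u = qf S N' u u" for u unfolding qf_def using assms(2) by (intro sum.cong) auto
  thus ?thesis using assms(1) unfolding psd_on_qf by simp
qed

lemma psd_on_reindex:
  assumes b: "bij_betw e A B" and p: "psd_on B N"
  shows "psd_on A (\<lambda>p q. N (e p) (e q))"
proof -
  have "qf A (\<lambda>p q. N (e p) (e q)) v v = qf B N (\<lambda>x. v (inv_into A e x)) (\<lambda>x. v (inv_into A e x))" for v
  proof -
    have inv: "inv_into A e (e p) = p" if "p \<in> A" for p using b that by (simp add: bij_betw_def)
    have "qf A (\<lambda>p q. N (e p) (e q)) v v = (\<Sum>p\<in>A. \<Sum>q\<in>A. cnj (v (inv_into A e (e p))) * N (e p) (e q) * v (inv_into A e (e q)))"
      unfolding qf_def using inv by (intro sum.cong) auto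
    also have "\<dots> = qf B N (\<lambda>x. v (inv_into A e x)) (\<lambda>x. v (inv_into A e x))"
      unfolding qf_def
      using sum.reindex_bij_betw[OF b, of "\<lambda>b. \<Sum>q\<in>A. cnj (v (inv_into A e b)) * N b (e q) * v (inv_into A e (e q))"]
        sum.reindex_bij_betw[OF b, of "\<lambda>c. cnj (v (inv_into A e _)) * N _ c * v (inv_into A e c)"]
      by (simp add: sum.reindex_bij_betw[OF b])
    finally show ?thesis .
  qed
  thus ?thesis using p unfolding psd_on_qf by simp
qed

lemma psd_rank1: "psd_on S (rank1 h h)"
proof -
  have "qf S (rank1 h h) v v = (\<Sum>i\<in>S. cnj (v i) * h i) * cnj (\<Sum>i\<in>S. cnj (v i) * h i)" for v
    unfolding qf_def rank1_def by (simp add: sum_product cnj_sum algebra_simps)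
  moreover have "Im (z * cnj z) = 0 \<and> Re (z * cnj z) \<ge> 0" for z :: complex
    unfolding complex_mult_cnj by simp
  ultimately show ?thesis unfolding psd_on_qf by presburger
qed

lemma op_scale_0[simp]: "op_scale 0 X = 0"
  unfolding op_scale_def by (simp add: zero_fun_def)

lemma op_scale_zero_mat[simp]: "op_scale c 0 = 0"
  unfolding op_scale_def by (simp add: zero_fun_def)

lemma op_scale_apply: "op_scale c X a b = c * X a b"
  unfolding op_scale_def by simp

lemma plus_apply2: "(X + Y) a b = X a b + Y a b"
  by simp

lemma zero_lmat[simp]: "(\<lambda>a b. 0) = (0::('a,'b) lmat)"
  by (simp add: zero_fun_def)

lemma lin_zero: "lin_map L \<Longrightarrow> L 0 = 0"
  unfolding lin_map_def by (metis op_scale_0)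

lemma lin_sum: "lin_map L \<Longrightarrow> L (sum f A) = (\<Sum>a\<in>A. L (f a))"
  by (induction A rule: infinite_finite_induct) (auto simp: lin_zero lin_map_def)

lemma op_scale_sum: "op_scale c (sum f A) = (\<Sum>a\<in>A. op_scale c (f a))"
  unfolding op_scale_def by (rule ext, rule ext) (simp add: sum_fun_apply sum_distrib_left)

definition delta :: "'a \<Rightarrow> 'a \<Rightarrow> complex" where
  "delta i = (\<lambda>a. if a = i then 1 else 0)"

lemma mat_decomp:
  fixes X :: "('a::finite, 'b::finite) lmat"
  shows "X = (\<Sum>i\<in>UNIV. \<Sum>j\<in>UNIV. op_scale (X i j) (rank1 (delta i) (delta j)))"
proof (rule ext, rule ext)
  fix a b
  have e: "op_scale (X i j) (rank1 (delta i) (delta j)) a b = (if a = i then (if b = j then X i j else 0) else 0)" for i j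
    by (simp add: op_scale_def rank1_def delta_def)
  have "(\<Sum>i\<in>UNIV. \<Sum>j\<in>UNIV. op_scale (X i j) (rank1 (delta i) (delta j))) a b
      = (\<Sum>i\<in>UNIV. if a = i then (\<Sum>j\<in>UNIV. if b = j then X i j else 0) else 0)"
    unfolding sum_fun_apply e by (intro sum.cong) auto
  also have "\<dots> = X a b" by simp
  finally show "X a b = (\<Sum>i\<in>UNIV. \<Sum>j\<in>UNIV. op_scale (X i j) (rank1 (delta i) (delta j))) a b" by simp
qed

lemma lin_eq_rank1:
  fixes X :: "('a::finite, 'a) lmat"
  assumes "lin_map L1" "lin_map L2" "\<And>h g. L1 (rank1 h g) = L2 (rank1 h g)"
  shows "L1 X = L2 X"
proof -
  have "L1 X = (\<Sum>i\<in>UNIV. \<Sum>j\<in>UNIV. op_scale (X i j) (L1 (rank1 (delta i) (delta j))))"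
    by (subst mat_decomp) (simp add: lin_sum[OF assms(1)] assms(1)[unfolded lin_map_def])
  also have "\<dots> = (\<Sum>i\<in>UNIV. \<Sum>j\<in>UNIV. op_scale (X i j) (L2 (rank1 (delta i) (delta j))))"
    by (simp add: assms(3))
  also have "\<dots> = L2 X"
    by (subst (2) mat_decomp) (simp add: lin_sum[OF assms(2)] assms(2)[unfolded lin_map_def])
  finally show ?thesis .
qed

lemma polarization:
  "rank1 h g = op_scale (1/4) (rank1 (\<lambda>i. h i + g i) (\<lambda>i. h i + g i))
     + op_scale (-1/4) (rank1 (\<lambda>i. h i - g i) (\<lambda>i. h i - g i))
     + op_scale (\<i>/4) (rank1 (\<lambda>i. h i + \<i> * g i) (\<lambda>i. h i + \<i> * g i))
     + op_scale (-\<i>/4) (rank1 (\<lambda>i. h i - \<i> * g i) (\<lambda>i. h i - \<i> * g i))"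
  by (rule ext, rule ext) (simp add: op_scale_def rank1_def field_simps)

lemma state_scale:
  fixes h :: "'a::finite \<Rightarrow> complex"
  assumes "h \<noteq> (\<lambda>_. 0)"
  shows "\<exists>c \<rho>. is_state \<rho> \<and> rank1 h h = op_scale c \<rho>"
proof -
  define n where "n = (\<Sum>i\<in>UNIV. (cmod (h i))^2)"
  obtain i0 where "h i0 \<noteq> 0" using assms by auto
  hence "(cmod (h i0))^2 > 0" by simp
  hence npos: "n > 0" unfolding n_def
    by (meson finite_UNIV iso_tuple_UNIV_I sum_pos2 zero_le_power2)
  define s where "s = sqrt n"
  have s: "s > 0" "s * s = n" using npos by (auto simp: s_def)
  define h' where "h' i = h i / complex_of_real s" for i
  have "rank1 h h = op_scale (complex_of_real n) (rank1 h' h')"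
    unfolding rank1_def op_scale_def h'_def s(2)[symmetric] using s
    using npos by (intro ext) (simp add: field_simps s(2) flip: of_real_mult)
  moreover have "is_state (rank1 h' h')"
  proof -
    have "op_trace (rank1 h' h') = (\<Sum>i\<in>UNIV. h i * cnj (h i)) / complex_of_real (s * s)"
      unfolding op_trace_def rank1_def h'_def by (simp add: sum_divide_distrib field_simps)
    also have "(\<Sum>i\<in>UNIV. h i * cnj (h i)) = complex_of_real n"
      unfolding n_def by (simp only: of_real_sum complex_norm_square)
    finally have "op_trace (rank1 h' h') = 1" using s npos by simp
    thus ?thesis unfolding is_state_def psd_def using psd_rank1 by blast
  qed
  ultimately show ?thesis by blast
qed

lemma lin_eq_states:
  fixes X :: "('a::finite, 'a) lmat"
  assumes l1: "lin_map L1" and l2: "lin_map L2" and st: "\<And>\<rho>. is_state \<rho> \<Longrightarrow> L1 \<rho> = L2 \<rho>"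
  shows "L1 X = L2 X"
proof -
  have diag: "L1 (rank1 h h) = L2 (rank1 h h)" for h :: "'a \<Rightarrow> complex"
  proof (cases "h = (\<lambda>_. 0)")
    case True
    hence "rank1 h h = 0" by (simp add: rank1_def)
    thus ?thesis using lin_zero[OF l1] lin_zero[OF l2] by simp
  next
    case False
    then obtain c \<rho> where "is_state \<rho>" "rank1 h h = op_scale c \<rho>" using state_scale by blast
    thus ?thesis using st l1 l2 unfolding lin_map_def by simp
  qed
  have "L1 (rank1 h g) = L2 (rank1 h g)" for h g
  proof -
    have a1: "L1 (X + Y) = L1 X + L1 Y" "L1 (op_scale c X) = op_scale c (L1 X)" for X Y c
      using l1 unfolding lin_map_def by auto
    have a2: "L2 (X + Y) = L2 X + L2 Y" "L2 (op_scale c X) = op_scale c (L2 X)" for X Y c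
      using l2 unfolding lin_map_def by auto
    show ?thesis
      apply (subst (1 2) polarization)
      apply (simp only: a1 a2 diag)
      done
  qed
  thus ?thesis using lin_eq_rank1[OF l1 l2] by blast
qed

definition matvec :: "('k, 'h) lmat \<Rightarrow> ('h::finite \<Rightarrow> complex) \<Rightarrow> 'k \<Rightarrow> complex" where
  "matvec K h = (\<lambda>k. \<Sum>a\<in>UNIV. K k a * h a)"

lemma kraus1_rank1: "kraus1 K (rank1 h g) = rank1 (matvec K h) (matvec K g)"
  unfolding kraus1_def rank1_def matvec_def
  by (intro ext) (simp add: sum_product cnj_sum algebra_simps)

lemma lin_kraus1: "lin_map (kraus1 K)"
  unfolding lin_map_def kraus1_def op_scale_def
  by (auto intro!: ext simp: algebra_simps sum.distrib sum_distrib_left)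

lemma lin_ptrace2: "lin_map \<Phi> \<Longrightarrow> lin_map (\<lambda>X. ptrace2 (\<Phi> X))"
  unfolding lin_map_def ptrace2_def op_scale_def
  by (auto intro!: ext simp: sum.distrib sum_distrib_left)

lemma lin_ptrace1: "lin_map \<Phi> \<Longrightarrow> lin_map (\<lambda>X. ptrace1 (\<Phi> X))"
  unfolding lin_map_def ptrace1_def op_scale_def
  by (auto intro!: ext simp: sum.distrib sum_distrib_left)

lemma lin_sum_maps: "(\<And>y. lin_map (F y)) \<Longrightarrow> lin_map (\<lambda>X. \<Sum>y\<in>Y. F y X)"
  unfolding lin_map_def by (simp add: sum.distrib op_scale_sum)

lemma lin_tens: "lin_map (\<lambda>X. tens (kraus1 K X) \<tau>)"
  using lin_kraus1[of K] unfolding lin_map_def tens_def op_scale_def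
  by (auto intro!: ext simp: algebra_simps)

lemma ptrace2_tens: "ptrace2 (tens A \<tau>) = op_scale (op_trace \<tau>) A"
  unfolding ptrace2_def tens_def op_scale_def op_trace_def
  by (intro ext) (simp add: sum_distrib_left sum_distrib_right mult.commute)

lemma ptrace1_tens: "ptrace1 (tens A \<tau>) = op_scale (op_trace A) \<tau>"
  unfolding ptrace1_def tens_def op_scale_def op_trace_def
  by (intro ext) (simp add: sum_distrib_left sum_distrib_right mult.commute)

lemma tens_rank1_inj:
  assumes "w \<noteq> (\<lambda>_. 0)" "tens (rank1 w w) \<tau>1 = tens (rank1 w w) \<tau>2"
  shows "\<tau>1 = \<tau>2"
proof (intro ext)
  fix v v'
  obtain k where k: "w k \<noteq> 0" using assms(1) by auto
  have "tens (rank1 w w) \<tau>1 (k,v) (k,v') = tens (rank1 w w) \<tau>2 (k,v) (k,v')" using assms(2) by simp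
  thus "\<tau>1 v v' = \<tau>2 v v'" using k by (simp add: tens_def rank1_def)
qed

lemma block:
  fixes \<Phi> :: "'y::finite \<Rightarrow> ('h::finite,'h) lmat \<Rightarrow> ('k::finite \<times> 'v::finite, 'k \<times> 'v) lmat"
    and f :: "nat \<Rightarrow> 'h \<Rightarrow> complex"
  assumes cp: "\<And>y. completely_positive (\<Phi> y)"
    and tot: "\<And>X. (\<Sum>y\<in>UNIV. ptrace2 (\<Phi> y X)) = kraus1 K X"
  shows "\<exists>\<tau>. psd \<tau> \<and> (\<forall>i<2. \<forall>j<2. \<Phi> y (rank1 (f i) (f j)) = tens (rank1 (matvec K (f i)) (matvec K (f j))) \<tau>)"
proof -
  define X :: "(nat \<times> 'h, nat \<times> 'h) lmat" where "X = rank1 (\<lambda>p. f (fst p) (snd p)) (\<lambda>p. f (fst p) (snd p))"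
  have pX: "psd_on ({..<2} \<times> UNIV) X" unfolding X_def by (rule psd_rank1)
  have pA: "psd_on ({..<2} \<times> UNIV) (ampliate 2 (\<Phi> y') X)" for y'
    using cp[of y'] pX unfolding completely_positive_def by blast
  define T :: "(nat \<times> 'k) set" where "T = {..<2} \<times> UNIV"
  have finT: "finite T" unfolding T_def by simp
  define e :: "(nat \<times> 'k) \<times> 'v \<Rightarrow> nat \<times> ('k \<times> 'v)" where "e p = (fst (fst p), (snd (fst p), snd p))" for p
  have bij: "bij_betw e (T \<times> UNIV) ({..<2} \<times> UNIV)"
    unfolding bij_betw_def inj_on_def T_def e_def
    by (auto simp: image_iff)
  define M where "M y' p q = \<Phi> y' (rank1 (f (fst (fst p))) (f (fst (fst q)))) (snd (fst p), snd p) (snd (fst q), snd q)" for y' and p q :: "(nat \<times> 'k) \<times> 'v"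
  have pM: "psd_on (T \<times> UNIV) (M y')" for y'
  proof (rule psd_on_cong[OF psd_on_reindex[OF bij pA[of y']]])
    fix p q :: "(nat \<times> 'k) \<times> 'v" assume "p \<in> T \<times> UNIV" "q \<in> T \<times> UNIV"
    hence "fst (fst p) < 2" "fst (fst q) < 2" unfolding T_def by auto
    thus "ampliate 2 (\<Phi> y') X (e p) (e q) = M y' p q"
      unfolding ampliate_def e_def M_def X_def rank1_def by (simp add: case_prod_beta)
  qed
  define w where "w a = matvec K (f (fst a)) (snd a)" for a :: "nat \<times> 'k"
  have tot_e: "(\<Sum>y'\<in>UNIV. \<Sum>v\<in>UNIV. M y' (a,v) (b,v)) = w a * cnj (w b)" for a b
  proof -
    have "(\<Sum>y'\<in>UNIV. ptrace2 (\<Phi> y' (rank1 (f (fst a)) (f (fst b))))) (snd a) (snd b) = kraus1 K (rank1 (f (fst a)) (f (fst b))) (snd a) (snd b)"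
      using tot by simp
    thus ?thesis unfolding sum_fun_apply kraus1_rank1 ptrace2_def M_def w_def by (simp add: rank1_def)
  qed
  have pQ: "psd_on T (\<lambda>a b. w a * cnj (w b) - (\<Sum>v\<in>UNIV. M y (a,v) (b,v)))"
  proof -
    have "psd_on T (\<lambda>a b. \<Sum>y'\<in>UNIV - {y}. \<Sum>v\<in>UNIV. M y' (a,v) (b,v))"
      by (rule psd_on_sum) (rule psd_on_ptrace[OF finT pM])
    moreover have "(\<Sum>y'\<in>UNIV - {y}. \<Sum>v\<in>UNIV. M y' (a,v) (b,v)) = w a * cnj (w b) - (\<Sum>v\<in>UNIV. M y (a,v) (b,v))" for a b
      using tot_e[of a b] sum.remove[of UNIV y "\<lambda>y'. \<Sum>v\<in>UNIV. M y' (a,v) (b,v)"] by (simp add: algebra_simps)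
    ultimately show ?thesis by simp
  qed
  obtain \<tau> where t: "psd \<tau>" "\<forall>a\<in>T. \<forall>b\<in>T. \<forall>v v'. M y (a,v) (b,v') = w a * cnj (w b) * \<tau> v v'"
    using rank_one_core[OF finT pM[of y] pQ] by blast
  have "\<Phi> y (rank1 (f i) (f j)) = tens (rank1 (matvec K (f i)) (matvec K (f j))) \<tau>" if "i < 2" "j < 2" for i j
  proof (intro ext)
    fix p q :: "'k \<times> 'v"
    have "M y ((i, fst p), snd p) ((j, fst q), snd q) = w (i, fst p) * cnj (w (j, fst q)) * \<tau> (snd p) (snd q)"
      using t(2) that unfolding T_def by auto
    thus "\<Phi> y (rank1 (f i) (f j)) p q = tens (rank1 (matvec K (f i)) (matvec K (f j))) \<tau> p q"
      unfolding M_def w_def tens_def rank1_def by simp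
  qed
  thus ?thesis using t(1) by blast
qed

lemma key:
  fixes \<Phi> :: "'y::finite \<Rightarrow> ('h::finite,'h) lmat \<Rightarrow> ('k::finite \<times> 'v::finite, 'k \<times> 'v) lmat"
  assumes cp: "\<And>y. completely_positive (\<Phi> y)"
    and tot: "\<And>X. (\<Sum>y\<in>UNIV. ptrace2 (\<Phi> y X)) = kraus1 K X"
  shows "\<exists>\<tau>. psd \<tau> \<and> (\<forall>X. \<Phi> y X = tens (kraus1 K X) \<tau>)"
proof -
  have blk: "\<exists>\<tau>. psd \<tau> \<and> \<Phi> y (rank1 h h) = tens (rank1 (matvec K h) (matvec K h)) \<tau>
      \<and> \<Phi> y (rank1 h g) = tens (rank1 (matvec K h) (matvec K g)) \<tau>
      \<and> \<Phi> y (rank1 g g) = tens (rank1 (matvec K g) (matvec K g)) \<tau>" for h g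
  proof -
    define F where "F = (\<lambda>i::nat. if i = 0 then h else g)"
    have F: "F 0 = h" "F 1 = g" unfolding F_def by auto
    from block[OF cp tot, of y F] obtain \<tau> where t: "psd \<tau>"
      and B: "\<forall>i<2. \<forall>j<2. \<Phi> y (rank1 (F i) (F j)) = tens (rank1 (matvec K (F i)) (matvec K (F j))) \<tau>"
      by blast
    have "\<Phi> y (rank1 (F 0) (F 0)) = tens (rank1 (matvec K (F 0)) (matvec K (F 0))) \<tau>"
      "\<Phi> y (rank1 (F 0) (F 1)) = tens (rank1 (matvec K (F 0)) (matvec K (F 1))) \<tau>"
      "\<Phi> y (rank1 (F 1) (F 1)) = tens (rank1 (matvec K (F 1)) (matvec K (F 1))) \<tau>"
      using B by simp_all
    thus ?thesis unfolding F using t by blast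
  qed
  have zero_tens: "tens (rank1 (\<lambda>_. 0) w) \<tau> = 0" for w \<tau>
    unfolding tens_def rank1_def by simp
  have "\<exists>\<tau>. psd \<tau> \<and> (\<forall>h g. \<Phi> y (rank1 h g) = tens (kraus1 K (rank1 h g)) \<tau>)"
  proof (cases "\<forall>h. matvec K h = (\<lambda>_. 0)")
    case True
    have "psd (\<lambda>_ _. 0)" unfolding psd_def psd_on_qf qf_def by simp
    moreover have "\<Phi> y (rank1 h g) = tens (kraus1 K (rank1 h g)) (\<lambda>_ _. 0)" for h g
      using blk[of h g] True unfolding kraus1_rank1 by (auto simp: zero_tens)
    ultimately show ?thesis by blast
  next
    case False
    then obtain h0 where h0: "matvec K h0 \<noteq> (\<lambda>_. 0)" by auto
    obtain \<tau>0 where t0: "psd \<tau>0" "\<Phi> y (rank1 h0 h0) = tens (rank1 (matvec K h0) (matvec K h0)) \<tau>0"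
      using blk[of h0 h0] by blast
    have "\<Phi> y (rank1 h g) = tens (kraus1 K (rank1 h g)) \<tau>0" for h g
    proof (cases "matvec K h = (\<lambda>_. 0)")
      case True
      thus ?thesis using blk[of h g] unfolding kraus1_rank1 by (auto simp: zero_tens)
    next
      case False
      obtain \<tau>1 where t1: "\<Phi> y (rank1 h0 h0) = tens (rank1 (matvec K h0) (matvec K h0)) \<tau>1"
         "\<Phi> y (rank1 h h) = tens (rank1 (matvec K h) (matvec K h)) \<tau>1"
        using blk[of h0 h] by blast
      have "\<tau>1 = \<tau>0" by (rule tens_rank1_inj[OF h0], rule trans[OF t1(1)[symmetric] t0(2)])
      obtain \<tau>2 where t2: "\<Phi> y (rank1 h h) = tens (rank1 (matvec K h) (matvec K h)) \<tau>2"
         "\<Phi> y (rank1 h g) = tens (rank1 (matvec K h) (matvec K g)) \<tau>2"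
        using blk[of h g] by blast
      have "\<tau>2 = \<tau>1" by (rule tens_rank1_inj[OF False], rule trans[OF t2(1)[symmetric] t1(2)])
      hence "\<tau>2 = \<tau>0" using \<open>\<tau>1 = \<tau>0\<close> by simp
      thus ?thesis using t2(2) unfolding kraus1_rank1 by simp
    qed
    thus ?thesis using t0(1) by blast
  qed
  then obtain \<tau> where t: "psd \<tau>" "\<And>h g. \<Phi> y (rank1 h g) = tens (kraus1 K (rank1 h g)) \<tau>"
    by blast
  have l: "lin_map (\<Phi> y)" using cp[of y] unfolding completely_positive_def by blast
  have "\<Phi> y X = tens (kraus1 K X) \<tau>" for X
    by (rule lin_eq_rank1[OF l lin_tens], rule t(2))
  thus ?thesis using t(1) by blast
qed

lemma qf_deltas:
  fixes M :: "('a::finite, 'a) lmat"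
  shows "qf UNIV M (\<lambda>q. if q = a then 1 else 0) (\<lambda>q. if q = b then 1 else 0) = M a b"
proof -
  have "qf UNIV M (\<lambda>q. if q = a then 1 else 0) (\<lambda>q. if q = b then 1 else 0)
      = (\<Sum>p\<in>UNIV. cnj (if p = a then 1 else 0) * M p b)" by (simp add: qf_delta_r)
  also have "\<dots> = (\<Sum>p\<in>UNIV. if p = a then M p b else 0)" by (intro sum.cong) auto
  finally show ?thesis by simp
qed

lemma psd_diag: "psd (\<tau>::('a::finite,'a) lmat) \<Longrightarrow> Im (\<tau> v v) = 0 \<and> Re (\<tau> v v) \<ge> 0"
  unfolding psd_def psd_on_qf using qf_deltas[of \<tau> v v] by metis

lemma psd_trace: "psd (\<tau>::('a::finite,'a) lmat) \<Longrightarrow> Im (op_trace \<tau>) = 0 \<and> Re (op_trace \<tau>) \<ge> 0"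
  unfolding op_trace_def using psd_diag[of \<tau>] by (simp add: Im_sum Re_sum sum_nonneg)

lemma psd_trace0:
  assumes p: "psd (\<tau>::('a::finite,'a) lmat)" and t: "op_trace \<tau> = 0"
  shows "\<tau> = 0"
proof (intro ext)
  fix v w
  have "(\<Sum>v\<in>UNIV. Re (\<tau> v v)) = 0" using t unfolding op_trace_def by (metis Re_sum zero_complex.simps(1))
  hence "Re (\<tau> v v) = 0" using psd_diag[OF p] by (simp add: sum_nonneg_eq_0_iff)
  hence "\<tau> v v = 0" using psd_diag[OF p, of v] by (simp add: complex_eq_iff)
  hence "qf UNIV \<tau> (\<lambda>q. if q = v then 1 else 0) (\<lambda>q. if q = v then 1 else 0) = 0" by (simp add: qf_deltas)
  from psd_cs[OF p[unfolded psd_def] this, of "\<lambda>q. if q = w then 1 else 0"]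
  show "\<tau> v w = 0 v w" by (simp add: qf_deltas)
qed

lemma qf_scale: "qf S (op_scale c X) u z = c * qf S X u z"
  unfolding qf_def op_scale_def by (simp add: sum_distrib_left algebra_simps)

lemma psd_scale: "psd \<tau> \<Longrightarrow> r \<ge> 0 \<Longrightarrow> psd (op_scale (complex_of_real r) \<tau>)"
  unfolding psd_def psd_on_qf qf_scale by simp

lemma op_scale_scale: "op_scale a (op_scale b X) = op_scale (a * b) X"
  unfolding op_scale_def by (simp add: mult.assoc)

lemma trace_scale: "op_trace (op_scale c X) = c * op_trace X"
  unfolding op_trace_def op_scale_def by (simp add: sum_distrib_left)

lemma trace_mult_scale: "op_trace (op_mult (op_scale c A) \<rho>) = c * op_trace (op_mult A \<rho>)"
  unfolding op_trace_def op_mult_def op_scale_def by (simp add: sum_distrib_left mult.assoc)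

lemma sum_op_scale: "(\<Sum>y\<in>Y. op_scale (c y) A) = op_scale (\<Sum>y\<in>Y. c y) A"
  unfolding op_scale_def by (intro ext) (simp add: sum_fun_apply sum_distrib_right)

lemma trace_kraus:
  fixes K :: "('k::finite, 'h::finite) lmat"
  shows "op_trace (op_mult (\<lambda>i k. \<Sum>a\<in>UNIV. cnj (K a i) * K a k) \<rho>) = op_trace (kraus1 K \<rho>)"
proof -
  have "op_trace (op_mult (\<lambda>i k. \<Sum>a\<in>UNIV. cnj (K a i) * K a k) \<rho>)
     = (\<Sum>i\<in>UNIV. \<Sum>k\<in>UNIV. \<Sum>a\<in>UNIV. K a k * \<rho> k i * cnj (K a i))"
    unfolding op_trace_def op_mult_def by (simp add: sum_distrib_right sum_distrib_left algebra_simps)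
  also have "\<dots> = (\<Sum>i\<in>UNIV. \<Sum>a\<in>UNIV. \<Sum>k\<in>UNIV. K a k * \<rho> k i * cnj (K a i))"
    by (rule sum.cong[OF refl], rule sum.swap)
  also have "\<dots> = (\<Sum>a\<in>UNIV. \<Sum>i\<in>UNIV. \<Sum>k\<in>UNIV. K a k * \<rho> k i * cnj (K a i))"
    by (rule sum.swap)
  also have "\<dots> = (\<Sum>a\<in>UNIV. \<Sum>k\<in>UNIV. \<Sum>i\<in>UNIV. K a k * \<rho> k i * cnj (K a i))"
    by (rule sum.cong[OF refl], rule sum.swap)
  also have "\<dots> = op_trace (kraus1 K \<rho>)"
    unfolding op_trace_def kraus1_def ..
  finally show ?thesis .
qed

theorem corollary6:
  fixes I :: "'x::finite \<Rightarrow> ('h::finite, 'h) lmat \<Rightarrow> ('k::finite, 'k) lmat"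
    and J :: "'y::finite \<Rightarrow> ('h, 'h) lmat \<Rightarrow> ('v::finite, 'v) lmat"
  assumes "instrument I" and "indecomposable I"
    and "instrument J" and "compatible I J"
  shows "\<exists>(\<xi> :: 'x \<Rightarrow> 'y \<Rightarrow> ('v, 'v) lmat) (\<nu> :: 'x \<Rightarrow> 'y \<Rightarrow> real).
           (\<forall>x y. is_state (\<xi> x y)) \<and> (\<forall>x y. \<nu> x y \<ge> 0) \<and> (\<forall>x. (\<Sum>y\<in>UNIV. \<nu> x y) = 1) \<and>
           (\<forall>y \<rho>. is_state \<rho> \<longrightarrow>
              J y \<rho> = (\<Sum>x\<in>UNIV. op_scale
                 (op_trace (op_mult (op_scale (complex_of_real (\<nu> x y)) (induced_povm I x)) \<rho>))
                 (\<xi> x y)))"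
proof -
  from assms(4) obtain G :: "'x \<times> 'y \<Rightarrow> ('h, 'h) lmat \<Rightarrow> ('k \<times> 'v, 'k \<times> 'v) lmat"
    where G: "instrument G"
    and GJ: "\<And>\<rho> y. is_state \<rho> \<Longrightarrow> (\<Sum>x\<in>UNIV. ptrace1 (G (x, y) \<rho>)) = J y \<rho>"
    and GI: "\<And>\<rho> x. is_state \<rho> \<Longrightarrow> (\<Sum>y\<in>UNIV. ptrace2 (G (x, y) \<rho>)) = I x \<rho>"
    unfolding compatible_def by blast
  have cpG: "completely_positive (G p)" for p using G unfolding instrument_def by blast
  have linG: "lin_map (G p)" for p using cpG[of p] unfolding completely_positive_def by blast
  have "\<exists>K. I x = kraus1 K" for x
  proof (cases "I x = (\<lambda>_. 0)")
    case True
    have "kraus1 ((\<lambda>_ _. 0) :: ('k, 'h) lmat) = (\<lambda>_. 0)" unfolding kraus1_def by (intro ext) simp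
    thus ?thesis using True by metis
  next
    case False
    thus ?thesis using assms(2) unfolding indecomposable_def by blast
  qed
  then obtain Kx where Kx: "\<And>x. I x = kraus1 (Kx x)" by metis
  have tot: "(\<Sum>y\<in>UNIV. ptrace2 (G (x, y) X)) = kraus1 (Kx x) X" for x X
  proof (rule lin_eq_states[of "\<lambda>X. \<Sum>y\<in>UNIV. ptrace2 (G (x, y) X)" "kraus1 (Kx x)"])
    show "lin_map (\<lambda>X. \<Sum>y\<in>UNIV. ptrace2 (G (x, y) X))"
      by (rule lin_sum_maps, rule lin_ptrace2, rule linG)
    show "lin_map (kraus1 (Kx x))" by (rule lin_kraus1)
    show "(\<Sum>y\<in>UNIV. ptrace2 (G (x, y) \<rho>)) = kraus1 (Kx x) \<rho>" if "is_state \<rho>" for \<rho>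
      using GI[OF that, of x] Kx[of x] by simp
  qed
  have ex: "\<forall>p. \<exists>\<tau>. psd \<tau> \<and> (\<forall>X. G p X = tens (kraus1 (Kx (fst p)) X) \<tau>)"
  proof
    fix p :: "'x \<times> 'y"
    obtain x y where p: "p = (x, y)" by (cases p)
    have "\<exists>\<tau>. psd \<tau> \<and> (\<forall>X. G (x, y) X = tens (kraus1 (Kx x) X) \<tau>)"
      by (rule key[of "\<lambda>y. G (x, y)"], rule cpG, rule tot)
    thus "\<exists>\<tau>. psd \<tau> \<and> (\<forall>X. G p X = tens (kraus1 (Kx (fst p)) X) \<tau>)" unfolding p by simp
  qed
  then obtain \<tau>' where \<tau>': "\<And>p. psd (\<tau>' p) \<and> (\<forall>X. G p X = tens (kraus1 (Kx (fst p)) X) (\<tau>' p))"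
    by metis
  define \<tau> where "\<tau> x y = \<tau>' (x, y)" for x y
  have \<tau>psd: "psd (\<tau> x y)" for x y using \<tau>'[of "(x,y)"] unfolding \<tau>_def by simp
  have \<tau>G: "G (x, y) X = tens (kraus1 (Kx x) X) (\<tau> x y)" for x y X using \<tau>'[of "(x,y)"] unfolding \<tau>_def by simp
  define live where "live x \<longleftrightarrow> (\<exists>X. kraus1 (Kx x) X \<noteq> 0)" for x
  have sum1: "(\<Sum>y\<in>UNIV. op_trace (\<tau> x y)) = 1" if lx: "live x" for x
  proof -
    obtain X where X: "kraus1 (Kx x) X \<noteq> 0" using lx unfolding live_def by blast
    then obtain a b where ab: "kraus1 (Kx x) X a b \<noteq> 0" by (metis ext zero_lmat)
    have "op_scale (\<Sum>y\<in>UNIV. op_trace (\<tau> x y)) (kraus1 (Kx x) X) = kraus1 (Kx x) X"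
      using tot[of x X] unfolding \<tau>G ptrace2_tens sum_op_scale .
    hence "(\<Sum>y\<in>UNIV. op_trace (\<tau> x y)) * kraus1 (Kx x) X a b = kraus1 (Kx x) X a b"
      by (metis op_scale_apply)
    thus ?thesis using ab by simp
  qed
  define a0 :: 'v where "a0 = undefined"
  define \<sigma>0 :: "('v, 'v) lmat" where "\<sigma>0 = rank1 (delta a0) (delta a0)"
  have \<sigma>0: "is_state \<sigma>0"
  proof -
    have "op_trace \<sigma>0 = (\<Sum>i\<in>UNIV. if i = a0 then 1 else 0)"
      unfolding \<sigma>0_def op_trace_def rank1_def delta_def by (intro sum.cong) auto
    thus ?thesis unfolding is_state_def psd_def using psd_rank1[of UNIV "delta a0"] \<sigma>0_def by simp
  qed
  define \<nu> where "\<nu> x y = (if live x then Re (op_trace (\<tau> x y)) else 1 / real (card (UNIV :: 'y set)))" for x y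
  define \<xi> where "\<xi> x y = (if live x \<and> op_trace (\<tau> x y) \<noteq> 0 then op_scale (1 / op_trace (\<tau> x y)) (\<tau> x y) else \<sigma>0)" for x y
  have trreal: "op_trace (\<tau> x y) = complex_of_real (Re (op_trace (\<tau> x y)))" for x y
    using psd_trace[OF \<tau>psd[of x y]] by (simp add: complex_eq_iff)
  have st: "is_state (\<xi> x y)" for x y
  proof (cases "live x \<and> op_trace (\<tau> x y) \<noteq> 0")
    case True
    define t where "t = Re (op_trace (\<tau> x y))"
    have tpos: "t > 0" using psd_trace[OF \<tau>psd[of x y]] True trreal[of x y] unfolding t_def
      by (metis less_eq_real_def of_real_0)
    have e: "\<xi> x y = op_scale (complex_of_real (1 / t)) (\<tau> x y)"
      unfolding \<xi>_def using True trreal[of x y] by (simp add: t_def)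
    show ?thesis unfolding e is_state_def
      using psd_scale[OF \<tau>psd[of x y], of "1/t"] tpos trreal[of x y] True
      by (simp add: trace_scale t_def)
  next
    case False
    have "\<xi> x y = \<sigma>0" unfolding \<xi>_def by (rule if_not_P[OF False])
    thus ?thesis using \<sigma>0 by simp
  qed
  have nn: "\<nu> x y \<ge> 0" for x y
    unfolding \<nu>_def using psd_trace[OF \<tau>psd[of x y]] by simp
  have s1: "(\<Sum>y\<in>UNIV. \<nu> x y) = 1" for x
  proof (cases "live x")
    case True
    have "(\<Sum>y\<in>UNIV. \<nu> x y) = Re (\<Sum>y\<in>UNIV. op_trace (\<tau> x y))"
      unfolding \<nu>_def using True by (simp add: Re_sum)
    thus ?thesis using sum1[OF True] by simp
  next
    case False
    thus ?thesis unfolding \<nu>_def by simp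
  qed
  have povm: "op_trace (op_mult (induced_povm I x) \<rho>) = op_trace (I x \<rho>)" if "is_state \<rho>" for x \<rho>
  proof -
    have "\<exists>A. \<forall>\<rho>. is_state \<rho> \<longrightarrow> op_trace (op_mult A \<rho>) = op_trace (I x \<rho>)"
      by (rule exI[of _ "\<lambda>i k. \<Sum>a\<in>UNIV. cnj (Kx x a i) * Kx x a k"]) (simp add: trace_kraus Kx[of x])
    from someI_ex[OF this] show ?thesis using that unfolding induced_povm_def by blast
  qed
  have form: "J y \<rho> = (\<Sum>x\<in>UNIV. op_scale
                 (op_trace (op_mult (op_scale (complex_of_real (\<nu> x y)) (induced_povm I x)) \<rho>))
                 (\<xi> x y))" if "is_state \<rho>" for y \<rho>
  proof -
    have "J y \<rho> = (\<Sum>x\<in>UNIV. op_scale (op_trace (kraus1 (Kx x) \<rho>)) (\<tau> x y))"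
      unfolding GJ[OF that, symmetric] \<tau>G ptrace1_tens ..
    also have "\<dots> = (\<Sum>x\<in>UNIV. op_scale
                 (op_trace (op_mult (op_scale (complex_of_real (\<nu> x y)) (induced_povm I x)) \<rho>))
                 (\<xi> x y))"
    proof (rule sum.cong[OF refl])
      fix x
      have tm: "op_trace (op_mult (op_scale (complex_of_real (\<nu> x y)) (induced_povm I x)) \<rho>)
          = complex_of_real (\<nu> x y) * op_trace (kraus1 (Kx x) \<rho>)"
        unfolding trace_mult_scale povm[OF that] Kx[of x] ..
      show "op_scale (op_trace (kraus1 (Kx x) \<rho>)) (\<tau> x y) = op_scale
                 (op_trace (op_mult (op_scale (complex_of_real (\<nu> x y)) (induced_povm I x)) \<rho>))
                 (\<xi> x y)"
      proof (cases "live x")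
        case False
        hence "kraus1 (Kx x) \<rho> = 0" unfolding live_def by blast
        thus ?thesis unfolding tm by (simp add: op_trace_def)
      next
        case True
        show ?thesis
        proof (cases "op_trace (\<tau> x y) = 0")
          case True
          hence t0: "\<tau> x y = 0" using psd_trace0[OF \<tau>psd] by blast
          have n0: "\<nu> x y = 0" using \<open>live x\<close> True by (simp add: \<nu>_def)
          show ?thesis unfolding tm unfolding n0 t0 by simp
        next
          case False
          have nu: "complex_of_real (\<nu> x y) = op_trace (\<tau> x y)"
            unfolding \<nu>_def using \<open>live x\<close> trreal[of x y] by simp
          show ?thesis unfolding tm unfolding nu \<xi>_def using \<open>live x\<close> False
            by (simp add: op_scale_scale)
        qed
      qed
    qed
    finally show ?thesis .
  qed
  show ?thesis
    by (rule exI[of _ \<xi>], rule exI[of _ \<nu>]) (use st nn s1 form in blast)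
qed

end
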